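(* Let $I\subset\mathbb R$ be a (not necessarily bounded) closed connected set with $0\in I$, equipped with the usual metric and base point $0$. Let $f\in\mathrm{Lip}_0(I,I)$ be such that $\mathrm{int}(R_{\widehat f})\neq\emptyset$. Then $f\circ f$ is the identity on $I$. In particular $R_{\widehat f}=\mathcal F(I)$.
   Context: $\mathrm{Lip}_0(I,I)$ denotes the Lipschitz maps $f:I\to I$ with $f(0)=0$; $\mathrm{Lip}_0(I)$ the real-valued Lipschitz functions vanishing at $0$ normed by the Lipschitz constant. $\delta:I\to\mathrm{Lip}_0(I)^*$, $\delta(x)(\varphi)=\varphi(x)$; the Lipschitz-free space $\mathcal F(I)$ is the norm-closed linear span of $\delta(I)$. $\widehat f$ is the unique bounded linear operator on $\mathcal F(I)$ with $\widehat f(\delta(x))=\delta(f(x))$. For an operator $T$, $R_T=\{\mu:\liminf_{n}\|T^n\mu-\mu\|=0\}$. *)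

theory Defs
  imports "HOL-Analysis.Analysis"
begin

text \<open>Lip_0(I): real Lipschitz functions on I vanishing at 0. Functions are taken
 extensional (zero outside I) so that each element of Lip_0(I) has a unique representative.\<close>
definition Lip0 :: "real set \<Rightarrow> (real \<Rightarrow> real) set" where
  "Lip0 I = {\<phi>. (\<exists>C. C-lipschitz_on I \<phi>) \<and> \<phi> 0 = 0 \<and> (\<forall>x. x \<notin> I \<longrightarrow> \<phi> x = 0)}"

definition lipconst :: "real set \<Rightarrow> (real \<Rightarrow> real) \<Rightarrow> real" where
  "lipconst I \<phi> = Sup ({0} \<union> {\<bar>\<phi> x - \<phi> y\<bar> / \<bar>x - y\<bar> | x y. x \<in> I \<and> y \<in> I \<and> x \<noteq> y})"

definition Lip0_dual :: "real set \<Rightarrow> ((real \<Rightarrow> real) \<Rightarrow> real) set" where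
  "Lip0_dual I = {\<mu>. (\<forall>\<phi>. \<phi> \<notin> Lip0 I \<longrightarrow> \<mu> \<phi> = 0)
      \<and> (\<forall>\<phi> \<psi> a b. \<phi> \<in> Lip0 I \<longrightarrow> \<psi> \<in> Lip0 I \<longrightarrow>
            \<mu> (\<lambda>x. a * \<phi> x + b * \<psi> x) = a * \<mu> \<phi> + b * \<mu> \<psi>)
      \<and> (\<exists>C. \<forall>\<phi>\<in>Lip0 I. \<bar>\<mu> \<phi>\<bar> \<le> C * lipconst I \<phi>)}"

definition dnorm :: "real set \<Rightarrow> ((real \<Rightarrow> real) \<Rightarrow> real) \<Rightarrow> real" where
  "dnorm I \<mu> = Sup ({0} \<union> {\<bar>\<mu> \<phi>\<bar> | \<phi>. \<phi> \<in> Lip0 I \<and> lipconst I \<phi> \<le> 1})"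

definition dirac :: "real set \<Rightarrow> real \<Rightarrow> (real \<Rightarrow> real) \<Rightarrow> real" where
  "dirac I x = (\<lambda>\<phi>. if \<phi> \<in> Lip0 I then \<phi> x else 0)"

definition dirac_span :: "real set \<Rightarrow> ((real \<Rightarrow> real) \<Rightarrow> real) set" where
  "dirac_span I = {\<mu>. \<exists>(S::nat set) c p. finite S \<and> (\<forall>i\<in>S. p i \<in> I) \<and>
      \<mu> = (\<lambda>\<phi>. \<Sum>i\<in>S. c i * dirac I (p i) \<phi>)}"

definition free_space :: "real set \<Rightarrow> ((real \<Rightarrow> real) \<Rightarrow> real) set" where
  "free_space I = {\<mu> \<in> Lip0_dual I. \<forall>\<epsilon>>0. \<exists>\<nu>\<in>dirac_span I. dnorm I (\<lambda>\<phi>. \<mu> \<phi> - \<nu> \<phi>) < \<epsilon>}"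

definition recurrent_set :: "real set \<Rightarrow> (((real \<Rightarrow> real) \<Rightarrow> real) \<Rightarrow> ((real \<Rightarrow> real) \<Rightarrow> real))
      \<Rightarrow> ((real \<Rightarrow> real) \<Rightarrow> real) set" where
  "recurrent_set I T = {\<mu> \<in> free_space I.
      liminf (\<lambda>n. ereal (dnorm I (\<lambda>\<phi>. (T ^^ n) \<mu> \<phi> - \<mu> \<phi>))) = 0}"

definition nonempty_interior_in_free :: "real set \<Rightarrow> ((real \<Rightarrow> real) \<Rightarrow> real) set \<Rightarrow> bool" where
  "nonempty_interior_in_free I A \<longleftrightarrow> (\<exists>\<mu>\<in>free_space I. \<exists>\<epsilon>>0.
      \<forall>\<nu>\<in>free_space I. dnorm I (\<lambda>\<phi>. \<nu> \<phi> - \<mu> \<phi>) < \<epsilon> \<longrightarrow> \<nu> \<in> A)"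

end

theory Submission
  imports Defs
begin



lemma noninj_aux:
  fixes g :: "real \<Rightarrow> real"
  assumes ab: "a < b" and cont: "continuous_on {a..b} g" and gab: "g a = g b"
    and c: "c \<in> {a..b}" "g c > g a"
  shows "\<exists>\<alpha> \<beta>. \<alpha> < \<beta> \<and> {\<alpha><..<\<beta>} \<subseteq> {a<..<b} \<and> (\<forall>x\<in>{\<alpha><..<\<beta>}. \<exists>y\<in>{a..b}. y \<notin> {\<alpha><..<\<beta>} \<and> g y = g x)"
proof -
  obtain c0 where c0: "c0 \<in> {a..b}" "\<forall>y\<in>{a..b}. g y \<le> g c0"
    using continuous_attains_sup[of "{a..b}" g] cont ab by auto
  have "g c \<le> g c0" using c0(2) c(1) by blast
  hence gc0: "g c0 > g a" using c(2) by linarith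
  hence "c0 \<noteq> a" "c0 \<noteq> b" using gab by auto
  hence c0': "a < c0" "c0 < b" using c0(1) by auto
  have cc: "\<forall>e>0. \<exists>d>0. \<forall>x'\<in>{a..b}. dist x' c0 < d \<longrightarrow> dist (g x') (g c0) < e"
    using cont c0(1) unfolding continuous_on_iff by blast
  obtain d where d: "d > 0" "\<forall>x'\<in>{a..b}. dist x' c0 < d \<longrightarrow> dist (g x') (g c0) < g c0 - g a"
    using cc[rule_format, of "g c0 - g a"] gc0 by auto
  define \<alpha> where "\<alpha> = max a (c0 - d)"
  have "\<alpha> < c0" using d c0' by (simp add: \<alpha>_def)
  moreover have "{\<alpha><..<c0} \<subseteq> {a<..<b}" using c0' by (auto simp: \<alpha>_def)
  moreover have "\<forall>x\<in>{\<alpha><..<c0}. \<exists>y\<in>{a..b}. y \<notin> {\<alpha><..<c0} \<and> g y = g x"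
  proof
    fix x assume x: "x \<in> {\<alpha><..<c0}"
    hence xab: "x \<in> {a..b}" and "dist x c0 < d" using c0' by (auto simp: \<alpha>_def dist_real_def)
    hence "dist (g x) (g c0) < g c0 - g a" using d by auto
    hence gx: "g x > g b" using gab by (auto simp: dist_real_def)
    have "g x \<le> g c0" using c0 xab by auto
    moreover have "continuous_on {c0..b} g" by (rule continuous_on_subset[OF cont]) (use c0' in auto)
    ultimately obtain y where "c0 \<le> y" "y \<le> b" "g y = g x"
      using IVT2'[of g b "g x" c0] gx c0' by auto
    thus "\<exists>y\<in>{a..b}. y \<notin> {\<alpha><..<c0} \<and> g y = g x" using c0' by (intro bexI[of _ y]) auto
  qed
  ultimately show ?thesis by blast
qed

lemma noninj:
  fixes g :: "real \<Rightarrow> real"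
  assumes ab: "a < b" and cont: "continuous_on {a..b} g" and gab: "g a = g b"
  shows "\<exists>\<alpha> \<beta>. \<alpha> < \<beta> \<and> {\<alpha><..<\<beta>} \<subseteq> {a<..<b} \<and> (\<forall>x\<in>{\<alpha><..<\<beta>}. \<exists>y\<in>{a..b}. y \<notin> {\<alpha><..<\<beta>} \<and> g y = g x)"
proof -
  consider (up) "\<exists>c\<in>{a..b}. g c > g a" | (down) "\<exists>c\<in>{a..b}. g c < g a" | (const) "\<forall>c\<in>{a..b}. g c = g a"
    using linorder_neqE_linordered_idom by blast
  thus ?thesis
  proof cases
    case up thus ?thesis using noninj_aux[OF assms] by blast
  next
    case down
    then obtain c where c: "c \<in> {a..b}" "- g c > - g a" by auto
    have cg: "continuous_on {a..b} (\<lambda>x. - g x)" using cont by (intro continuous_intros)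
    have gab': "- g a = - g b" using gab by simp
    obtain \<alpha> \<beta> where ab': "\<alpha> < \<beta>" "{\<alpha><..<\<beta>} \<subseteq> {a<..<b}"
       "\<forall>x\<in>{\<alpha><..<\<beta>}. \<exists>y\<in>{a..b}. y \<notin> {\<alpha><..<\<beta>} \<and> - g y = - g x"
      using noninj_aux[of a b "\<lambda>x. - g x", OF ab cg gab' c] by blast
    have "\<forall>x\<in>{\<alpha><..<\<beta>}. \<exists>y\<in>{a..b}. y \<notin> {\<alpha><..<\<beta>} \<and> g y = g x" using ab'(3) by simp
    hence "\<alpha> < \<beta> \<and> {\<alpha><..<\<beta>} \<subseteq> {a<..<b} \<and> (\<forall>x\<in>{\<alpha><..<\<beta>}. \<exists>y\<in>{a..b}. y \<notin> {\<alpha><..<\<beta>} \<and> g y = g x)"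
      using ab'(1,2) by (intro conjI)
    thus ?thesis by (intro exI)
  next
    case const
    have "\<forall>x\<in>{a<..<b}. \<exists>y\<in>{a..b}. y \<notin> {a<..<b} \<and> g y = g x"
    proof
      fix x assume "x \<in> {a<..<b}"
      hence "x \<in> {a..b}" by auto
      hence "g b = g x" using bspec[OF const, of b] bspec[OF const, of x] ab by simp
      thus "\<exists>y\<in>{a..b}. y \<notin> {a<..<b} \<and> g y = g x" using ab by (intro bexI[of _ b]) auto
    qed
    thus ?thesis using ab by blast
  qed
qed

lemma inj_mono:
  fixes f :: "real \<Rightarrow> real"
  assumes conn: "connected I" and cont: "continuous_on I f" and inj: "inj_on f I"
  shows "(\<forall>x\<in>I. \<forall>y\<in>I. x < y \<longrightarrow> f x < f y) \<or> (\<forall>x\<in>I. \<forall>y\<in>I. x < y \<longrightarrow> f y < f x)"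
proof -
  have iv: "\<And>x z. x \<in> I \<Longrightarrow> z \<in> I \<Longrightarrow> {x..z} \<subseteq> I" 
  proof
    fix x z t assume "x \<in> I" "z \<in> I" "t \<in> {x..z}"
    thus "t \<in> I" using conn[unfolded connected_iff_interval, rule_format, of x z t] by simp
  qed
  have triple: "(f x < f y \<longleftrightarrow> f x < f z) \<and> (f x < f z \<longleftrightarrow> f y < f z)"
    if "x \<in> I" "z \<in> I" "x < y" "y < z" for x y z
  proof -
    have "continuous_on {x..z} f" using cont iv[OF that(1,2)] by (rule continuous_on_subset)
    moreover have "inj_on f {x..z}" using inj iv[OF that(1,2)] by (rule inj_on_subset)
    ultimately have "(f x < f y \<and> f y < f z) \<or> (f z < f y \<and> f y < f x)"
      using continuous_inj_imp_mono[of x y z f] that by auto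
    thus ?thesis by auto
  qed
  have pair: "(f x < f y \<longleftrightarrow> f m < f M)"
    if "m \<in> I" "M \<in> I" "m \<le> x" "x < y" "y \<le> M" for m M x y
  proof -
    have xI: "x \<in> I" and yI: "y \<in> I" using iv[OF that(1,2)] that by auto
    have 1: "f x < f y \<longleftrightarrow> f m < f y"
    proof (cases "m = x")
      case False thus ?thesis using triple[of m y x] that yI by auto
    qed simp
    have 2: "f m < f y \<longleftrightarrow> f m < f M"
    proof (cases "y = M")
      case False thus ?thesis using triple[of m M y] that by auto
    qed simp
    show ?thesis using 1 2 by simp
  qed
  have ne: "f x \<noteq> f y" if "x \<in> I" "y \<in> I" "x < y" for x y
    using inj that inj_on_eq_iff by fastforce
  show ?thesis
  proof (rule ccontr)
    assume "\<not> ?thesis"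
    then obtain x y u v where xy: "x \<in> I" "y \<in> I" "x < y" "\<not> f x < f y"
      and uv: "u \<in> I" "v \<in> I" "u < v" "\<not> f v < f u" by auto
    have "f u < f v" using ne[OF uv(1-3)] uv(4) by auto
    moreover have "min x u \<in> I" "max y v \<in> I" using xy uv by (auto simp: min_def max_def)
    ultimately show False using pair[of "min x u" "max y v" x y] pair[of "min x u" "max y v" u v] xy uv by auto
  qed
qed

lemma incr_wander:
  fixes h :: "real \<Rightarrow> real"
  assumes mono: "\<forall>x\<in>I. \<forall>y\<in>I. x < y \<longrightarrow> h x < h y" and hI: "h ` I \<subseteq> I" and conn: "connected I"
    and x: "x \<in> I" "h x \<noteq> x"
  shows "\<exists>\<alpha> \<beta>. \<alpha> < \<beta> \<and> {\<alpha><..<\<beta>} \<subseteq> I \<and> {\<alpha><..<\<beta>} \<subseteq> {min x (h x) .. max x (h x)} \<and>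
     (\<forall>t\<in>{\<alpha><..<\<beta>}. \<forall>n\<ge>1. (h ^^ n) t \<notin> {\<alpha><..<\<beta>})"
proof -
  have hxI: "h x \<in> I" using hI x by auto
  have iv: "\<And>x z. x \<in> I \<Longrightarrow> z \<in> I \<Longrightarrow> {x..z} \<subseteq> I" 
  proof
    fix x z t assume "x \<in> I" "z \<in> I" "t \<in> {x..z}"
    thus "t \<in> I" using conn[unfolded connected_iff_interval, rule_format, of x z t] by simp
  qed
  have hn: "\<And>n t. t \<in> I \<Longrightarrow> (h ^^ n) t \<in> I" subgoal for n t by (induction n) (use hI in auto) done
  consider (up) "h x > x" | (down) "h x < x" using x by linarith
  thus ?thesis
  proof cases
    case up
    have "\<forall>t\<in>{x<..<h x}. \<forall>n\<ge>1. (h ^^ n) t \<notin> {x<..<h x}"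
    proof (intro ballI allI impI)
      fix t n assume t: "t \<in> {x<..<h x}" and n: "(1::nat) \<le> n"
      have tI: "t \<in> I" using iv[OF x(1) hxI] t by auto
      have ht: "h t > h x" using mono x(1) tI t by auto
      have step: "(h ^^ Suc k) t < (h ^^ Suc (Suc k)) t" for k
      proof (induction k)
        case 0
        have "t < h t" using ht t by auto
        thus ?case using mono tI hI by auto
      next
        case (Suc k)
        have "(h ^^ Suc k) t \<in> I" "(h ^^ Suc (Suc k)) t \<in> I" using hn[OF tI] by blast+
        from mono[rule_format, OF this Suc.IH] show ?case by simp
      qed
      have "h t \<le> (h ^^ Suc k) t" for k
      proof (induction k)
        case (Suc k) thus ?case using step[of k] by simp
      qed simp
      hence "h t \<le> (h ^^ n) t" using n by (metis Suc_pred' less_eq_Suc_le One_nat_def)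
      thus "(h ^^ n) t \<notin> {x<..<h x}" using ht by auto
    qed
    thus ?thesis using up iv[OF x(1) hxI] by (intro exI[of _ x] exI[of _ "h x"]) auto
  next
    case down
    have "\<forall>t\<in>{h x<..<x}. \<forall>n\<ge>1. (h ^^ n) t \<notin> {h x<..<x}"
    proof (intro ballI allI impI)
      fix t n assume t: "t \<in> {h x<..<x}" and n: "(1::nat) \<le> n"
      have tI: "t \<in> I" using iv[OF hxI x(1)] t by auto
      have ht: "h t < h x" using mono x(1) tI t by auto
      have step: "(h ^^ Suc (Suc k)) t < (h ^^ Suc k) t" for k
      proof (induction k)
        case 0
        have "h t < t" using ht t by auto
        thus ?case using mono tI hI by auto
      next
        case (Suc k)
        have "(h ^^ Suc k) t \<in> I" "(h ^^ Suc (Suc k)) t \<in> I" using hn[OF tI] by blast+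
        from mono[rule_format, OF this(2,1) Suc.IH] show ?case by simp
      qed
      have "(h ^^ Suc k) t \<le> h t" for k
      proof (induction k)
        case (Suc k) thus ?case using step[of k] by simp
      qed simp
      hence "(h ^^ n) t \<le> h t" using n by (metis Suc_pred' less_eq_Suc_le One_nat_def)
      thus "(h ^^ n) t \<notin> {h x<..<x}" using ht by auto
    qed
    thus ?thesis using down iv[OF hxI x(1)] by (intro exI[of _ "h x"] exI[of _ x]) auto
  qed
qed


lemma shrink0:
  fixes \<alpha> \<beta> :: real assumes "\<alpha> < \<beta>"
  shows "\<exists>\<alpha>' \<beta>'. \<alpha> \<le> \<alpha>' \<and> \<alpha>' < \<beta>' \<and> \<beta>' \<le> \<beta> \<and> 0 \<notin> {\<alpha>'<..<\<beta>'}"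
proof (cases "0 \<le> \<alpha> \<or> \<beta> \<le> 0")
  case True thus ?thesis using assms by (intro exI[of _ \<alpha>] exI[of _ \<beta>]) auto
next
  case False thus ?thesis by (intro exI[of _ 0] exI[of _ \<beta>]) auto
qed

lemma funpow_even: "(f ^^ (2*k)) t = ((\<lambda>t. f (f t)) ^^ k) t"
  by (induction k) auto

lemma decr_wander:
  fixes f :: "real \<Rightarrow> real"
  assumes mono: "\<forall>x\<in>I. \<forall>y\<in>I. x < y \<longrightarrow> f y < f x" and fI: "f ` I \<subseteq> I" and conn: "connected I"
    and I0: "0 \<in> I" and f0: "f 0 = 0" and x: "x \<in> I" "f (f x) \<noteq> x" and sg: "\<sigma> = 1 \<or> \<sigma> = (-1::real)" "\<sigma> * x > 0"
  shows "\<exists>\<alpha> \<beta>. \<alpha> < \<beta> \<and> {\<alpha><..<\<beta>} \<subseteq> I \<and> 0 \<notin> {\<alpha><..<\<beta>} \<and>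
     (\<forall>t\<in>{\<alpha><..<\<beta>}. \<forall>n\<ge>1. (f ^^ n) t \<notin> {\<alpha><..<\<beta>})"
proof -
  define h where "h = (\<lambda>t. f (f t))"
  have fpos: "\<sigma> * f s < 0" if "s \<in> I" "\<sigma> * s > 0" for s
  proof -
    have "(s > 0 \<and> \<sigma> = 1) \<or> (s < 0 \<and> \<sigma> = -1)" using sg(1) that(2) by (auto simp: zero_less_mult_iff)
    thus ?thesis using mono[rule_format, OF I0 that(1)] mono[rule_format, OF that(1) I0] f0 by auto
  qed
  have hI: "h ` I \<subseteq> I" using fI by (auto simp: h_def)
  have hmono: "\<forall>x\<in>I. \<forall>y\<in>I. x < y \<longrightarrow> h x < h y"
  proof (intro ballI impI)
    fix a b assume "a \<in> I" "b \<in> I" "a < b"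
    hence "f b < f a" "f a \<in> I" "f b \<in> I" using mono fI by auto
    thus "h a < h b" using mono by (auto simp: h_def)
  qed
  have hpos: "\<sigma> * h s > 0" if "s \<in> I" "\<sigma> * s > 0" for s
  proof -
    have "\<sigma> * f s < 0" by (rule fpos[OF that])
    moreover have "f s \<in> I" using fI that by auto
    have "(f s < 0 \<and> \<sigma> = 1) \<or> (f s > 0 \<and> \<sigma> = -1)" using sg(1) \<open>\<sigma> * f s < 0\<close> by (auto simp: mult_less_0_iff)
    thus ?thesis
    proof
      assume a: "f s < 0 \<and> \<sigma> = 1"
      have "f 0 < f (f s)" using mono[rule_format, OF \<open>f s \<in> I\<close> I0] a by simp
      thus ?thesis using a f0 by (simp add: h_def)
    next
      assume a: "f s > 0 \<and> \<sigma> = -1"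
      have "f (f s) < f 0" using mono[rule_format, OF I0 \<open>f s \<in> I\<close>] a by simp
      thus ?thesis using a f0 by (simp add: h_def)
    qed
  qed
  have hn: "(h ^^ k) s \<in> I \<and> \<sigma> * (h ^^ k) s > 0" if "s \<in> I" "\<sigma> * s > 0" for s k
    using that by (induction k) (use hpos hI in auto)
  have "h x \<noteq> x" using x by (simp add: h_def)
  from incr_wander[OF hmono hI conn x(1) this] obtain \<alpha> \<beta> where J: "\<alpha> < \<beta>" "{\<alpha><..<\<beta>} \<subseteq> I"
    "{\<alpha><..<\<beta>} \<subseteq> {min x (h x) .. max x (h x)}" "\<forall>t\<in>{\<alpha><..<\<beta>}. \<forall>n\<ge>1. (h ^^ n) t \<notin> {\<alpha><..<\<beta>}"
    by blast
  have hx: "\<sigma> * h x > 0" using hpos x(1) sg(2) by auto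
  have Jpos: "\<sigma> * t > 0" if "t \<in> {\<alpha><..<\<beta>}" for t
  proof -
    have "min x (h x) \<le> t" "t \<le> max x (h x)" using J(3) that by auto
    thus ?thesis using sg hx by (auto simp: min_def max_def split: if_splits)
  qed
  have "0 \<notin> {\<alpha><..<\<beta>}" using Jpos by fastforce
  moreover have "\<forall>t\<in>{\<alpha><..<\<beta>}. \<forall>n\<ge>1. (f ^^ n) t \<notin> {\<alpha><..<\<beta>}"
  proof (intro ballI allI impI)
    fix t n assume t: "t \<in> {\<alpha><..<\<beta>}" and n: "(1::nat) \<le> n"
    have tI: "t \<in> I" using J(2) t by auto
    define k where "k = n div 2"
    have "n = 2*k \<or> n = Suc (2*k)" unfolding k_def by presburger
    thus "(f ^^ n) t \<notin> {\<alpha><..<\<beta>}"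
    proof
      assume nk: "n = 2*k"
      hence "k \<ge> 1" using n by auto
      have "(f ^^ n) t = (h ^^ k) t" unfolding nk funpow_even h_def ..
      thus ?thesis using J(4) t \<open>k \<ge> 1\<close> by auto
    next
      assume nk: "n = Suc (2*k)"
      have "(f ^^ n) t = f ((h ^^ k) t)" unfolding nk by (simp add: funpow_even h_def)
      moreover have "\<sigma> * f ((h ^^ k) t) < 0" using hn[OF tI Jpos[OF t], of k] fpos by blast
      ultimately show ?thesis using Jpos by force
    qed
  qed
  ultimately show ?thesis using J(1,2) by blast
qed


lemma dyn:
  fixes I :: "real set" and f :: "real \<Rightarrow> real"
  assumes conn: "connected I" and I0: "0 \<in> I" and lip: "\<exists>C. C-lipschitz_on I f" and fI: "f ` I \<subseteq> I"
    and f0: "f 0 = 0" and bad: "\<exists>x\<in>I. f (f x) \<noteq> x"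
  shows "\<exists>\<alpha> \<beta>. \<alpha> < \<beta> \<and> {\<alpha><..<\<beta>} \<subseteq> I \<and> 0 \<notin> {\<alpha><..<\<beta>} \<and>
     (\<forall>x\<in>{\<alpha><..<\<beta>}. \<exists>y\<in>I. y \<notin> {\<alpha><..<\<beta>} \<and>
        (\<forall>n\<ge>1. (f ^^ n) x = (f ^^ n) y \<or> ((f ^^ n) x \<notin> {\<alpha><..<\<beta>} \<and> (f ^^ n) y \<notin> {\<alpha><..<\<beta>})))"
proof -
  obtain C where C: "C-lipschitz_on I f" using lip by blast
  have cont: "continuous_on I f" using C by (rule lipschitz_on_continuous_on)
  have iv: "\<And>x z. x \<in> I \<Longrightarrow> z \<in> I \<Longrightarrow> {x..z} \<subseteq> I"
  proof
    fix x z t assume "x \<in> I" "z \<in> I" "t \<in> {x..z}"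
    thus "t \<in> I" using conn[unfolded connected_iff_interval, rule_format, of x z t] by simp
  qed
  have fn0: "(f ^^ n) 0 = 0" for n by (induction n) (use f0 in auto)
  have from_wander: ?thesis if W: "\<alpha> < \<beta>" "{\<alpha><..<\<beta>} \<subseteq> I" "\<forall>t\<in>{\<alpha><..<\<beta>}. \<forall>n\<ge>1. (f ^^ n) t \<notin> {\<alpha><..<\<beta>}"
    for \<alpha> \<beta>
  proof -
    obtain \<alpha>' \<beta>' where s: "\<alpha> \<le> \<alpha>'" "\<alpha>' < \<beta>'" "\<beta>' \<le> \<beta>" "0 \<notin> {\<alpha>'<..<\<beta>'}" using shrink0[OF W(1)] by blast
    have sub: "{\<alpha>'<..<\<beta>'} \<subseteq> {\<alpha><..<\<beta>}" using s by auto
    have "\<forall>x\<in>{\<alpha>'<..<\<beta>'}. \<exists>y\<in>I. y \<notin> {\<alpha>'<..<\<beta>'} \<and>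
        (\<forall>n\<ge>1. (f ^^ n) x = (f ^^ n) y \<or> ((f ^^ n) x \<notin> {\<alpha>'<..<\<beta>'} \<and> (f ^^ n) y \<notin> {\<alpha>'<..<\<beta>'}))"
    proof
      fix x assume x: "x \<in> {\<alpha>'<..<\<beta>'}"
      have "\<forall>n\<ge>1. (f ^^ n) x \<notin> {\<alpha>'<..<\<beta>'}" using W(3) sub x by blast
      thus "\<exists>y\<in>I. y \<notin> {\<alpha>'<..<\<beta>'} \<and>
        (\<forall>n\<ge>1. (f ^^ n) x = (f ^^ n) y \<or> ((f ^^ n) x \<notin> {\<alpha>'<..<\<beta>'} \<and> (f ^^ n) y \<notin> {\<alpha>'<..<\<beta>'}))"
        using I0 s(4) fn0 by (intro bexI[of _ 0]) auto
    qed
    thus ?thesis using s(2,4) sub W(2) by blast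
  qed
  show ?thesis
  proof (cases "inj_on f I")
    case False
    then obtain a b where ab: "a \<in> I" "b \<in> I" "a < b" "f a = f b"
      unfolding inj_on_def by (metis linorder_neqE_linordered_idom)
    have "continuous_on {a..b} f" by (rule continuous_on_subset[OF cont iv[OF ab(1,2)]])
    from noninj[OF ab(3) this ab(4)] obtain \<alpha> \<beta> where J: "\<alpha> < \<beta>" "{\<alpha><..<\<beta>} \<subseteq> {a<..<b}"
      "\<forall>x\<in>{\<alpha><..<\<beta>}. \<exists>y\<in>{a..b}. y \<notin> {\<alpha><..<\<beta>} \<and> f y = f x" by blast
    obtain \<alpha>' \<beta>' where s: "\<alpha> \<le> \<alpha>'" "\<alpha>' < \<beta>'" "\<beta>' \<le> \<beta>" "0 \<notin> {\<alpha>'<..<\<beta>'}" using shrink0[OF J(1)] by blast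
    have sub: "{\<alpha>'<..<\<beta>'} \<subseteq> {\<alpha><..<\<beta>}" using s by auto
    have "{a<..<b} \<subseteq> {a..b}" by auto
    hence JI: "{\<alpha>'<..<\<beta>'} \<subseteq> I" using sub J(2) iv[OF ab(1,2)] by blast
    have "\<forall>x\<in>{\<alpha>'<..<\<beta>'}. \<exists>y\<in>I. y \<notin> {\<alpha>'<..<\<beta>'} \<and>
        (\<forall>n\<ge>1. (f ^^ n) x = (f ^^ n) y \<or> ((f ^^ n) x \<notin> {\<alpha>'<..<\<beta>'} \<and> (f ^^ n) y \<notin> {\<alpha>'<..<\<beta>'}))"
    proof
      fix x assume x: "x \<in> {\<alpha>'<..<\<beta>'}"
      then obtain y where y: "y \<in> {a..b}" "y \<notin> {\<alpha><..<\<beta>}" "f y = f x" using J(3) sub by blast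
      have "\<forall>n\<ge>1. (f ^^ n) x = (f ^^ n) y"
      proof (intro allI impI)
        fix n :: nat assume "1 \<le> n"
        then obtain m where "n = Suc m" by (cases n) auto
        thus "(f ^^ n) x = (f ^^ n) y" by (simp only: funpow_Suc_right comp_apply y(3))
      qed
      moreover have "y \<in> I" "y \<notin> {\<alpha>'<..<\<beta>'}" using y iv[OF ab(1,2)] sub by auto
      ultimately show "\<exists>y\<in>I. y \<notin> {\<alpha>'<..<\<beta>'} \<and>
        (\<forall>n\<ge>1. (f ^^ n) x = (f ^^ n) y \<or> ((f ^^ n) x \<notin> {\<alpha>'<..<\<beta>'} \<and> (f ^^ n) y \<notin> {\<alpha>'<..<\<beta>'}))"
        by blast
    qed
    thus ?thesis using s(2,4) JI by blast
  next
    case True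
    obtain x where x: "x \<in> I" "f (f x) \<noteq> x" using bad by blast
    from inj_mono[OF conn cont True] show ?thesis
    proof
      assume mono: "\<forall>x\<in>I. \<forall>y\<in>I. x < y \<longrightarrow> f x < f y"
      have "f x \<noteq> x" using x by auto
      from incr_wander[OF mono fI conn x(1) this] obtain \<alpha> \<beta> where
        "\<alpha> < \<beta>" "{\<alpha><..<\<beta>} \<subseteq> I" "\<forall>t\<in>{\<alpha><..<\<beta>}. \<forall>n\<ge>1. (f ^^ n) t \<notin> {\<alpha><..<\<beta>}" by blast
      thus ?thesis by (rule from_wander)
    next
      assume mono: "\<forall>x\<in>I. \<forall>y\<in>I. x < y \<longrightarrow> f y < f x"
      have "x \<noteq> 0" using x f0 by auto
      hence "\<exists>\<sigma>. (\<sigma> = 1 \<or> \<sigma> = (-1::real)) \<and> \<sigma> * x > 0"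
        by (cases "x > 0") (auto intro: exI[of _ 1] exI[of _ "-1"])
      then obtain \<sigma> where sg: "\<sigma> = 1 \<or> \<sigma> = (-1::real)" "\<sigma> * x > 0" by blast
      from decr_wander[OF mono fI conn I0 f0 x sg] obtain \<alpha> \<beta> where
        "\<alpha> < \<beta>" "{\<alpha><..<\<beta>} \<subseteq> I" "\<forall>t\<in>{\<alpha><..<\<beta>}. \<forall>n\<ge>1. (f ^^ n) t \<notin> {\<alpha><..<\<beta>}" by blast
      thus ?thesis by (rule from_wander)
    qed
  qed
qed




lemma lip0_bdd:
  assumes "\<phi> \<in> Lip0 I"
  shows "bdd_above ({0} \<union> {\<bar>\<phi> x - \<phi> y\<bar> / \<bar>x - y\<bar> | x y. x \<in> I \<and> y \<in> I \<and> x \<noteq> y})"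
proof -
  obtain C where C: "C-lipschitz_on I \<phi>" using assms by (auto simp: Lip0_def)
  have "\<And>x y. x \<in> I \<Longrightarrow> y \<in> I \<Longrightarrow> x \<noteq> y \<Longrightarrow> \<bar>\<phi> x - \<phi> y\<bar> / \<bar>x - y\<bar> \<le> C"
  proof -
    fix x y assume "x \<in> I" "y \<in> I" "x \<noteq> y"
    hence "\<bar>\<phi> x - \<phi> y\<bar> \<le> C * \<bar>x - y\<bar>" using lipschitz_onD[OF C] by (auto simp: dist_real_def)
    thus "\<bar>\<phi> x - \<phi> y\<bar> / \<bar>x - y\<bar> \<le> C" using \<open>x \<noteq> y\<close> by (simp add: divide_le_eq)
  qed
  moreover have "0 \<le> C" using lipschitz_on_nonneg[OF C] .
  ultimately show ?thesis unfolding bdd_above_def by (rule_tac x=C in exI) auto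
qed

lemma lipconst_nonneg: "\<phi> \<in> Lip0 I \<Longrightarrow> 0 \<le> lipconst I \<phi>"
  unfolding lipconst_def by (rule cSup_upper[OF _ lip0_bdd]) auto

lemma lip0_le:
  assumes "\<phi> \<in> Lip0 I" "x \<in> I" "y \<in> I"
  shows "\<bar>\<phi> x - \<phi> y\<bar> \<le> lipconst I \<phi> * \<bar>x - y\<bar>"
proof (cases "x = y")
  case False
  have "\<bar>\<phi> x - \<phi> y\<bar> / \<bar>x - y\<bar> \<le> lipconst I \<phi>"
    unfolding lipconst_def by (rule cSup_upper[OF _ lip0_bdd[OF assms(1)]]) (use assms False in auto)
  thus ?thesis using False by (simp add: divide_le_eq)
qed simp

lemma lip0_le1:
  assumes "\<phi> \<in> Lip0 I" "x \<in> I" "y \<in> I" "lipconst I \<phi> \<le> 1"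
  shows "\<bar>\<phi> x - \<phi> y\<bar> \<le> \<bar>x - y\<bar>"
proof -
  have "lipconst I \<phi> * \<bar>x - y\<bar> \<le> 1 * \<bar>x - y\<bar>" using assms(4) by (intro mult_right_mono) auto
  thus ?thesis using lip0_le[OF assms(1-3)] by simp
qed

lemma lipconst_le:
  assumes "0 \<le> M" "\<And>x y. x \<in> I \<Longrightarrow> y \<in> I \<Longrightarrow> \<bar>\<phi> x - \<phi> y\<bar> \<le> M * \<bar>x - y\<bar>"
  shows "lipconst I \<phi> \<le> M"
  unfolding lipconst_def
proof (rule cSup_least)
  fix r assume "r \<in> {0} \<union> {\<bar>\<phi> x - \<phi> y\<bar> / \<bar>x - y\<bar> | x y. x \<in> I \<and> y \<in> I \<and> x \<noteq> y}"
  then show "r \<le> M" using assms by (auto simp: divide_le_eq)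
qed auto

lemma lip0_lin:
  assumes "\<phi> \<in> Lip0 I" "\<psi> \<in> Lip0 I"
  shows "(\<lambda>x. a * \<phi> x + b * \<psi> x) \<in> Lip0 I"
proof -
  obtain C D where "C-lipschitz_on I \<phi>" "D-lipschitz_on I \<psi>" using assms by (auto simp: Lip0_def)
  hence "(\<bar>a\<bar>*C + \<bar>b\<bar>*D)-lipschitz_on I (\<lambda>x. a * \<phi> x + b * \<psi> x)"
    by (intro lipschitz_on_add lipschitz_on_cmult_real)
  thus ?thesis using assms by (auto simp: Lip0_def)
qed

definition bnd :: "real set \<Rightarrow> ((real \<Rightarrow> real) \<Rightarrow> real) \<Rightarrow> bool" where
  "bnd I A \<longleftrightarrow> (\<exists>M. \<forall>\<phi>\<in>Lip0 I. lipconst I \<phi> \<le> 1 \<longrightarrow> \<bar>A \<phi>\<bar> \<le> M)"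

lemma dnorm_ge:
  assumes "bnd I A" "\<phi> \<in> Lip0 I" "lipconst I \<phi> \<le> 1"
  shows "\<bar>A \<phi>\<bar> \<le> dnorm I A"
proof -
  obtain M where M: "\<forall>\<phi>\<in>Lip0 I. lipconst I \<phi> \<le> 1 \<longrightarrow> \<bar>A \<phi>\<bar> \<le> M" using assms(1) by (auto simp: bnd_def)
  have "bdd_above ({0} \<union> {\<bar>A \<phi>\<bar> | \<phi>. \<phi> \<in> Lip0 I \<and> lipconst I \<phi> \<le> 1})"
    unfolding bdd_above_def using M by (rule_tac x="max M 0" in exI) auto
  thus ?thesis unfolding dnorm_def by (rule cSup_upper[rotated]) (use assms in auto)
qed

lemma dnorm_nonneg: "bnd I A \<Longrightarrow> 0 \<le> dnorm I A"
proof -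
  assume "bnd I A"
  then obtain M where M: "\<forall>\<phi>\<in>Lip0 I. lipconst I \<phi> \<le> 1 \<longrightarrow> \<bar>A \<phi>\<bar> \<le> M" by (auto simp: bnd_def)
  have "bdd_above ({0} \<union> {\<bar>A \<phi>\<bar> | \<phi>. \<phi> \<in> Lip0 I \<and> lipconst I \<phi> \<le> 1})"
    unfolding bdd_above_def using M by (rule_tac x="max M 0" in exI) auto
  thus ?thesis unfolding dnorm_def by (rule cSup_upper[rotated]) auto
qed

lemma dnorm_le:
  assumes "0 \<le> M" "\<And>\<phi>. \<phi> \<in> Lip0 I \<Longrightarrow> lipconst I \<phi> \<le> 1 \<Longrightarrow> \<bar>A \<phi>\<bar> \<le> M"
  shows "dnorm I A \<le> M"
  unfolding dnorm_def by (rule cSup_least) (use assms in auto)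

lemma dual_bnd:
  assumes "\<mu> \<in> Lip0_dual I" shows "bnd I \<mu>"
proof -
  obtain C where C: "\<forall>\<phi>\<in>Lip0 I. \<bar>\<mu> \<phi>\<bar> \<le> C * lipconst I \<phi>" using assms by (auto simp: Lip0_dual_def)
  have "\<forall>\<phi>\<in>Lip0 I. lipconst I \<phi> \<le> 1 \<longrightarrow> \<bar>\<mu> \<phi>\<bar> \<le> \<bar>C\<bar>"
  proof (intro ballI impI)
    fix \<phi> assume "\<phi> \<in> Lip0 I" "lipconst I \<phi> \<le> 1"
    moreover have "0 \<le> lipconst I \<phi>" using lipconst_nonneg[OF \<open>\<phi> \<in> Lip0 I\<close>] .
    ultimately have "C * lipconst I \<phi> \<le> \<bar>C\<bar>"
    proof -
      have "C * lipconst I \<phi> \<le> \<bar>C\<bar> * lipconst I \<phi>"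
        using \<open>0 \<le> lipconst I \<phi>\<close> by (intro mult_right_mono) auto
      also have "\<dots> \<le> \<bar>C\<bar> * 1" using \<open>lipconst I \<phi> \<le> 1\<close> by (intro mult_left_mono) auto
      finally show ?thesis by simp
    qed
    thus "\<bar>\<mu> \<phi>\<bar> \<le> \<bar>C\<bar>" using C \<open>\<phi> \<in> Lip0 I\<close> by force
  qed
  thus ?thesis by (auto simp: bnd_def)
qed

lemma bnd_lin:
  assumes "bnd I A" "bnd I B"
  shows "bnd I (\<lambda>\<phi>. a * A \<phi> + b * B \<phi>)"
proof -
  obtain M where M: "\<forall>\<phi>\<in>Lip0 I. lipconst I \<phi> \<le> 1 \<longrightarrow> \<bar>A \<phi>\<bar> \<le> M" using assms(1) by (auto simp: bnd_def)
  obtain N where N: "\<forall>\<phi>\<in>Lip0 I. lipconst I \<phi> \<le> 1 \<longrightarrow> \<bar>B \<phi>\<bar> \<le> N" using assms(2) by (auto simp: bnd_def)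
  have "\<forall>\<phi>\<in>Lip0 I. lipconst I \<phi> \<le> 1 \<longrightarrow> \<bar>a * A \<phi> + b * B \<phi>\<bar> \<le> \<bar>a\<bar> * M + \<bar>b\<bar> * N"
  proof (intro ballI impI)
    fix \<phi> assume "\<phi> \<in> Lip0 I" "lipconst I \<phi> \<le> 1"
    hence "\<bar>A \<phi>\<bar> \<le> M" "\<bar>B \<phi>\<bar> \<le> N" using M N by auto
    hence "\<bar>a\<bar> * \<bar>A \<phi>\<bar> \<le> \<bar>a\<bar> * M" "\<bar>b\<bar> * \<bar>B \<phi>\<bar> \<le> \<bar>b\<bar> * N" by (auto intro: mult_left_mono)
    moreover have "\<bar>a * A \<phi> + b * B \<phi>\<bar> \<le> \<bar>a\<bar> * \<bar>A \<phi>\<bar> + \<bar>b\<bar> * \<bar>B \<phi>\<bar>"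
      by (metis abs_mult abs_triangle_ineq)
    ultimately show "\<bar>a * A \<phi> + b * B \<phi>\<bar> \<le> \<bar>a\<bar> * M + \<bar>b\<bar> * N" by linarith
  qed
  thus ?thesis by (auto simp: bnd_def)
qed


definition spanf :: "real set \<Rightarrow> nat set \<Rightarrow> (nat \<Rightarrow> real) \<Rightarrow> (nat \<Rightarrow> real) \<Rightarrow> (real \<Rightarrow> real) \<Rightarrow> real" where
  "spanf I S c p = (\<lambda>\<phi>. \<Sum>i\<in>S. c i * dirac I (p i) \<phi>)"

lemma spanf_eval: "\<phi> \<in> Lip0 I \<Longrightarrow> spanf I S c p \<phi> = (\<Sum>i\<in>S. c i * \<phi> (p i))"
  by (simp add: spanf_def dirac_def)

lemma lip0_zero: "\<phi> \<in> Lip0 I \<Longrightarrow> \<phi> 0 = 0"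
  by (simp add: Lip0_def)

lemma lip0_pt:
  assumes "\<phi> \<in> Lip0 I" "0 \<in> I" "x \<in> I"
  shows "\<bar>\<phi> x\<bar> \<le> lipconst I \<phi> * \<bar>x\<bar>"
  using lip0_le[OF assms(1) assms(3) assms(2)] lip0_zero[OF assms(1)] by simp

lemma spanf_dual:
  assumes "0 \<in> I" "finite S" "\<forall>i\<in>S. p i \<in> I"
  shows "spanf I S c p \<in> Lip0_dual I"
  unfolding Lip0_dual_def
proof (intro CollectI conjI allI impI)
  fix \<phi> assume "\<phi> \<notin> Lip0 I" thus "spanf I S c p \<phi> = 0" by (simp add: spanf_def dirac_def)
next
  fix \<phi> \<psi> a b assume "\<phi> \<in> Lip0 I" "\<psi> \<in> Lip0 I"
  hence "(\<lambda>x. a * \<phi> x + b * \<psi> x) \<in> Lip0 I" by (rule lip0_lin)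
  thus "spanf I S c p (\<lambda>x. a * \<phi> x + b * \<psi> x) = a * spanf I S c p \<phi> + b * spanf I S c p \<psi>"
    using \<open>\<phi> \<in> Lip0 I\<close> \<open>\<psi> \<in> Lip0 I\<close>
    by (simp add: spanf_eval sum_distrib_left sum.distrib[symmetric] algebra_simps)
next
  show "\<exists>C. \<forall>\<phi>\<in>Lip0 I. \<bar>spanf I S c p \<phi>\<bar> \<le> C * lipconst I \<phi>"
  proof (intro exI ballI)
    fix \<phi> assume \<phi>: "\<phi> \<in> Lip0 I"
    have "\<bar>spanf I S c p \<phi>\<bar> \<le> (\<Sum>i\<in>S. \<bar>c i * \<phi> (p i)\<bar>)"
      unfolding spanf_eval[OF \<phi>] by (rule sum_abs)
    also have "\<dots> \<le> (\<Sum>i\<in>S. \<bar>c i\<bar> * \<bar>p i\<bar> * lipconst I \<phi>)"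
    proof (rule sum_mono)
      fix i assume "i \<in> S"
      hence "\<bar>\<phi> (p i)\<bar> \<le> lipconst I \<phi> * \<bar>p i\<bar>" using lip0_pt[OF \<phi> assms(1)] assms(3) by auto
      hence "\<bar>c i\<bar> * \<bar>\<phi> (p i)\<bar> \<le> \<bar>c i\<bar> * (lipconst I \<phi> * \<bar>p i\<bar>)" by (intro mult_left_mono) auto
      thus "\<bar>c i * \<phi> (p i)\<bar> \<le> \<bar>c i\<bar> * \<bar>p i\<bar> * lipconst I \<phi>" by (simp add: abs_mult algebra_simps)
    qed
    also have "\<dots> = (\<Sum>i\<in>S. \<bar>c i\<bar> * \<bar>p i\<bar>) * lipconst I \<phi>" by (simp add: sum_distrib_right)
    finally show "\<bar>spanf I S c p \<phi>\<bar> \<le> (\<Sum>i\<in>S. \<bar>c i\<bar> * \<bar>p i\<bar>) * lipconst I \<phi>" .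
  qed
qed

lemma dnorm_zero: "dnorm I (\<lambda>\<phi>. 0) = 0"
proof -
  have "dnorm I (\<lambda>\<phi>. 0) \<le> 0" by (rule dnorm_le) auto
  moreover have "0 \<le> dnorm I (\<lambda>\<phi>. 0)" by (rule dnorm_nonneg) (auto simp: bnd_def)
  ultimately show ?thesis by simp
qed

lemma span_spanf: "\<mu> \<in> dirac_span I \<Longrightarrow> \<exists>S c p. finite S \<and> (\<forall>i\<in>S. p i \<in> I) \<and> \<mu> = spanf I S c p"
  by (auto simp: dirac_span_def spanf_def)

lemma spanf_span: "finite S \<Longrightarrow> \<forall>i\<in>S. p i \<in> I \<Longrightarrow> spanf I S c p \<in> dirac_span I"
  by (auto simp: dirac_span_def spanf_def)

lemma span_free:
  assumes "0 \<in> I" "\<mu> \<in> dirac_span I" shows "\<mu> \<in> free_space I"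
proof -
  obtain S c p where *: "finite S" "\<forall>i\<in>S. p i \<in> I" "\<mu> = spanf I S c p" using span_spanf[OF assms(2)] by blast
  show ?thesis unfolding free_space_def
  proof (intro CollectI conjI allI impI)
    show "\<mu> \<in> Lip0_dual I" using spanf_dual[OF assms(1) *(1,2)] *(3) by simp
    fix e :: real assume "e > 0"
    thus "\<exists>\<nu>\<in>dirac_span I. dnorm I (\<lambda>\<phi>. \<mu> \<phi> - \<nu> \<phi>) < e"
      using assms(2) by (intro bexI[of _ \<mu>]) (auto simp: dnorm_zero)
  qed
qed

lemma dirac_span_mem: "x \<in> I \<Longrightarrow> dirac I x \<in> dirac_span I"
proof -
  assume "x \<in> I"
  hence "spanf I {0} (\<lambda>_. 1) (\<lambda>_. x) \<in> dirac_span I" by (intro spanf_span) auto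
  moreover have "spanf I {0} (\<lambda>_. 1) (\<lambda>_. x) = dirac I x" by (simp add: spanf_def)
  ultimately show ?thesis by simp
qed

lemma span_lin:
  assumes "A \<in> dirac_span I" "B \<in> dirac_span I"
  shows "(\<lambda>\<phi>. a * A \<phi> + b * B \<phi>) \<in> dirac_span I"
proof -
  obtain S1 c1 p1 where 1: "finite S1" "\<forall>i\<in>S1. p1 i \<in> I" "A = spanf I S1 c1 p1" using span_spanf[OF assms(1)] by blast
  obtain S2 c2 p2 where 2: "finite S2" "\<forall>i\<in>S2. p2 i \<in> I" "B = spanf I S2 c2 p2" using span_spanf[OF assms(2)] by blast
  define S where "S = (\<lambda>i. 2*i) ` S1 \<union> (\<lambda>i. Suc (2*i)) ` S2"
  define c where "c = (\<lambda>i::nat. if even i then a * c1 (i div 2) else b * c2 (i div 2))"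
  define p where "p = (\<lambda>i::nat. if even i then p1 (i div 2) else p2 (i div 2))"
  have fin: "finite S" using 1 2 by (simp add: S_def)
  have pI: "\<forall>i\<in>S. p i \<in> I" using 1 2 by (auto simp: S_def p_def)
  have inj1: "inj_on (\<lambda>i::nat. 2*i) S1" by (auto simp: inj_on_def)
  have inj2: "inj_on (\<lambda>i::nat. Suc (2*i)) S2" by (auto simp: inj_on_def)
  have disj: "(\<lambda>i::nat. 2*i) ` S1 \<inter> (\<lambda>i. Suc (2*i)) ` S2 = {}" by auto presburger
  have "spanf I S c p = (\<lambda>\<phi>. a * A \<phi> + b * B \<phi>)"
  proof
    fix \<phi>
    have "spanf I S c p \<phi> = (\<Sum>i\<in>(\<lambda>i. 2*i) ` S1. c i * dirac I (p i) \<phi>) + (\<Sum>i\<in>(\<lambda>i. Suc (2*i)) ` S2. c i * dirac I (p i) \<phi>)"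
      unfolding spanf_def S_def using 1 2 disj by (simp add: sum.union_disjoint)
    also have "\<dots> = (\<Sum>i\<in>S1. a * c1 i * dirac I (p1 i) \<phi>) + (\<Sum>i\<in>S2. b * c2 i * dirac I (p2 i) \<phi>)"
    proof -
      have h: "\<And>x::nat. \<not> even (Suc (2*x)) \<and> Suc (2*x) div 2 = x" by presburger
      show ?thesis by (simp add: sum.reindex[OF inj1] sum.reindex[OF inj2] c_def p_def h)
    qed
    also have "\<dots> = a * A \<phi> + b * B \<phi>"
      by (simp add: 1(3) 2(3) spanf_def sum_distrib_left algebra_simps)
    finally show "spanf I S c p \<phi> = a * A \<phi> + b * B \<phi>" .
  qed
  thus ?thesis using spanf_span[OF fin pI, of c] by simp
qed

lemma dual_lin:
  assumes "A \<in> Lip0_dual I" "B \<in> Lip0_dual I"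
  shows "(\<lambda>\<phi>. a * A \<phi> + b * B \<phi>) \<in> Lip0_dual I"
proof -
  obtain CA where CA: "\<forall>\<phi>\<in>Lip0 I. \<bar>A \<phi>\<bar> \<le> CA * lipconst I \<phi>" using assms(1) by (auto simp: Lip0_dual_def)
  obtain CB where CB: "\<forall>\<phi>\<in>Lip0 I. \<bar>B \<phi>\<bar> \<le> CB * lipconst I \<phi>" using assms(2) by (auto simp: Lip0_dual_def)
  have bound: "\<forall>\<phi>\<in>Lip0 I. \<bar>a * A \<phi> + b * B \<phi>\<bar> \<le> (\<bar>a\<bar> * \<bar>CA\<bar> + \<bar>b\<bar> * \<bar>CB\<bar>) * lipconst I \<phi>"
  proof
    fix \<phi> assume \<phi>: "\<phi> \<in> Lip0 I"
    have L: "0 \<le> lipconst I \<phi>" by (rule lipconst_nonneg[OF \<phi>])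
    have "\<bar>A \<phi>\<bar> \<le> \<bar>CA\<bar> * lipconst I \<phi>" using CA \<phi> L by (meson abs_ge_self mult_right_mono order_trans)
    hence 1: "\<bar>a\<bar> * \<bar>A \<phi>\<bar> \<le> \<bar>a\<bar> * (\<bar>CA\<bar> * lipconst I \<phi>)" by (intro mult_left_mono) auto
    have "\<bar>B \<phi>\<bar> \<le> \<bar>CB\<bar> * lipconst I \<phi>" using CB \<phi> L by (meson abs_ge_self mult_right_mono order_trans)
    hence 2: "\<bar>b\<bar> * \<bar>B \<phi>\<bar> \<le> \<bar>b\<bar> * (\<bar>CB\<bar> * lipconst I \<phi>)" by (intro mult_left_mono) auto
    have "\<bar>a * A \<phi> + b * B \<phi>\<bar> \<le> \<bar>a\<bar> * \<bar>A \<phi>\<bar> + \<bar>b\<bar> * \<bar>B \<phi>\<bar>" by (metis abs_mult abs_triangle_ineq)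
    thus "\<bar>a * A \<phi> + b * B \<phi>\<bar> \<le> (\<bar>a\<bar> * \<bar>CA\<bar> + \<bar>b\<bar> * \<bar>CB\<bar>) * lipconst I \<phi>" using 1 2 by (simp add: algebra_simps)
  qed
  show ?thesis unfolding Lip0_dual_def
  proof (intro CollectI conjI allI impI)
    fix \<phi> assume "\<phi> \<notin> Lip0 I" thus "a * A \<phi> + b * B \<phi> = 0" using assms by (simp add: Lip0_dual_def)
  next
    fix \<phi> \<psi> c d assume "\<phi> \<in> Lip0 I" "\<psi> \<in> Lip0 I"
    hence "A (\<lambda>x. c * \<phi> x + d * \<psi> x) = c * A \<phi> + d * A \<psi>" "B (\<lambda>x. c * \<phi> x + d * \<psi> x) = c * B \<phi> + d * B \<psi>"
      using assms by (auto simp: Lip0_dual_def)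
    thus "a * A (\<lambda>x. c * \<phi> x + d * \<psi> x) + b * B (\<lambda>x. c * \<phi> x + d * \<psi> x) = c * (a * A \<phi> + b * B \<phi>) + d * (a * A \<psi> + b * B \<psi>)"
      by (simp add: algebra_simps)
  next
    show "\<exists>C. \<forall>\<phi>\<in>Lip0 I. \<bar>a * A \<phi> + b * B \<phi>\<bar> \<le> C * lipconst I \<phi>" using bound by blast
  qed
qed

lemma free_dual: "\<mu> \<in> free_space I \<Longrightarrow> \<mu> \<in> Lip0_dual I"
  by (simp add: free_space_def)

lemma free_bnd: "\<mu> \<in> free_space I \<Longrightarrow> bnd I \<mu>"
  by (simp add: free_dual dual_bnd)

lemma free_lin:
  assumes "0 \<in> I" "A \<in> free_space I" "B \<in> free_space I"
  shows "(\<lambda>\<phi>. a * A \<phi> + b * B \<phi>) \<in> free_space I"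
  unfolding free_space_def
proof (intro CollectI conjI allI impI)
  show "(\<lambda>\<phi>. a * A \<phi> + b * B \<phi>) \<in> Lip0_dual I" using assms by (intro dual_lin free_dual)
  fix e :: real assume e: "e > 0"
  define e' where "e' = e / (2 * (\<bar>a\<bar> + \<bar>b\<bar> + 1))"
  have e': "e' > 0" using e by (simp add: e'_def add_pos_nonneg)
  obtain \<nu>A where \<nu>A: "\<nu>A \<in> dirac_span I" "dnorm I (\<lambda>\<phi>. A \<phi> - \<nu>A \<phi>) < e'" using assms(2) e' by (auto simp: free_space_def)
  obtain \<nu>B where \<nu>B: "\<nu>B \<in> dirac_span I" "dnorm I (\<lambda>\<phi>. B \<phi> - \<nu>B \<phi>) < e'" using assms(3) e' by (auto simp: free_space_def)
  have bA: "bnd I (\<lambda>\<phi>. 1 * A \<phi> + (-1) * \<nu>A \<phi>)" using assms(2) span_free[OF assms(1) \<nu>A(1)] by (intro bnd_lin free_bnd)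
  have bB: "bnd I (\<lambda>\<phi>. 1 * B \<phi> + (-1) * \<nu>B \<phi>)" using assms(3) span_free[OF assms(1) \<nu>B(1)] by (intro bnd_lin free_bnd)
  have "dnorm I (\<lambda>\<phi>. (a * A \<phi> + b * B \<phi>) - (a * \<nu>A \<phi> + b * \<nu>B \<phi>)) \<le> \<bar>a\<bar> * e' + \<bar>b\<bar> * e'"
  proof (rule dnorm_le)
    show "0 \<le> \<bar>a\<bar> * e' + \<bar>b\<bar> * e'" using e' by simp
    fix \<phi> assume \<phi>: "\<phi> \<in> Lip0 I" "lipconst I \<phi> \<le> 1"
    have "\<bar>A \<phi> - \<nu>A \<phi>\<bar> \<le> e'" using dnorm_ge[OF bA \<phi>] \<nu>A(2) by simp
    hence 1: "\<bar>a\<bar> * \<bar>A \<phi> - \<nu>A \<phi>\<bar> \<le> \<bar>a\<bar> * e'" by (intro mult_left_mono) auto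
    have "\<bar>B \<phi> - \<nu>B \<phi>\<bar> \<le> e'" using dnorm_ge[OF bB \<phi>] \<nu>B(2) by simp
    hence 2: "\<bar>b\<bar> * \<bar>B \<phi> - \<nu>B \<phi>\<bar> \<le> \<bar>b\<bar> * e'" by (intro mult_left_mono) auto
    have "\<bar>(a * A \<phi> + b * B \<phi>) - (a * \<nu>A \<phi> + b * \<nu>B \<phi>)\<bar> = \<bar>a * (A \<phi> - \<nu>A \<phi>) + b * (B \<phi> - \<nu>B \<phi>)\<bar>"
      by (simp add: algebra_simps)
    also have "\<dots> \<le> \<bar>a\<bar> * \<bar>A \<phi> - \<nu>A \<phi>\<bar> + \<bar>b\<bar> * \<bar>B \<phi> - \<nu>B \<phi>\<bar>" by (metis abs_mult abs_triangle_ineq)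
    finally show "\<bar>(a * A \<phi> + b * B \<phi>) - (a * \<nu>A \<phi> + b * \<nu>B \<phi>)\<bar> \<le> \<bar>a\<bar> * e' + \<bar>b\<bar> * e'" using 1 2 by linarith
  qed
  also have "\<dots> < e"
  proof -
    have pos: "0 < 2 * (\<bar>a\<bar> + \<bar>b\<bar> + 1)" by (simp add: add_pos_nonneg)
    have h: "2 * (\<bar>a\<bar> + \<bar>b\<bar> + 1) * e' = e" using pos by (simp add: e'_def)
    have "0 < (\<bar>a\<bar> + \<bar>b\<bar> + 2) * e'" using e' by (simp add: add_pos_nonneg)
    thus ?thesis using h by (simp add: algebra_simps)
  qed
  finally have "dnorm I (\<lambda>\<phi>. a * A \<phi> + b * B \<phi> - (a * \<nu>A \<phi> + b * \<nu>B \<phi>)) < e" .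
  thus "\<exists>\<nu>\<in>dirac_span I. dnorm I (\<lambda>\<phi>. a * A \<phi> + b * B \<phi> - \<nu> \<phi>) < e"
    by (intro bexI[OF _ span_lin[OF \<nu>A(1) \<nu>B(1)]]) simp
qed


context
  fixes I :: "real set" and f :: "real \<Rightarrow> real" and T :: "((real \<Rightarrow> real) \<Rightarrow> real) \<Rightarrow> ((real \<Rightarrow> real) \<Rightarrow> real)"
  assumes I0: "0 \<in> I" and fI: "f ` I \<subseteq> I" and TF: "T ` free_space I \<subseteq> free_space I"
  and TL: "\<forall>\<mu>\<in>free_space I. \<forall>\<nu>\<in>free_space I. \<forall>a b::real.
           T (\<lambda>\<phi>. a * \<mu> \<phi> + b * \<nu> \<phi>) = (\<lambda>\<phi>. a * T \<mu> \<phi> + b * T \<nu> \<phi>)"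
  and TD: "\<forall>x\<in>I. T (dirac I x) = dirac I (f x)"
begin

lemma fn_I: "x \<in> I \<Longrightarrow> (f ^^ n) x \<in> I"
  by (induction n) (use fI in auto)

lemma zero_span: "(\<lambda>\<phi>. 0) \<in> dirac_span I"
proof -
  have "spanf I {} (\<lambda>_. 0) (\<lambda>_. 0) \<in> dirac_span I" by (intro spanf_span) auto
  thus ?thesis by (simp add: spanf_def)
qed

lemma T_zero: "T (\<lambda>\<phi>. 0) = (\<lambda>\<phi>. 0)"
proof -
  have z: "(\<lambda>\<phi>. 0) \<in> free_space I" using span_free[OF I0 zero_span] .
  show ?thesis using TL[rule_format, OF z z, of 0 0] by simp
qed

lemma T_spanf: "finite S \<Longrightarrow> \<forall>i\<in>S. p i \<in> I \<Longrightarrow> T (spanf I S c p) = spanf I S c (f \<circ> p)"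
proof (induction S rule: finite_induct)
  case empty
  show ?case using T_zero by (simp add: spanf_def)
next
  case (insert i S)
  have d: "dirac I (p i) \<in> free_space I" using insert by (intro span_free[OF I0] dirac_span_mem) auto
  have s: "spanf I S c p \<in> free_space I" using insert by (intro span_free[OF I0] spanf_span) auto
  have eq: "spanf I (insert i S) c p = (\<lambda>\<phi>. c i * dirac I (p i) \<phi> + 1 * spanf I S c p \<phi>)"
    using insert by (simp add: spanf_def)
  have "T (spanf I (insert i S) c p) = (\<lambda>\<phi>. c i * T (dirac I (p i)) \<phi> + 1 * T (spanf I S c p) \<phi>)"
    unfolding eq using TL d s by blast
  also have "\<dots> = spanf I (insert i S) c (f \<circ> p)"
    using insert TD by (simp add: spanf_def)
  finally show ?case .
qed

lemma Tn_free: "\<mu> \<in> free_space I \<Longrightarrow> (T ^^ n) \<mu> \<in> free_space I"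
  by (induction n) (use TF in auto)

lemma Tn_spanf: "finite S \<Longrightarrow> \<forall>i\<in>S. p i \<in> I \<Longrightarrow> (T ^^ n) (spanf I S c p) = spanf I S c ((f ^^ n) \<circ> p)"
proof (induction n)
  case 0 thus ?case by simp
next
  case (Suc n)
  have "(T ^^ Suc n) (spanf I S c p) = T (spanf I S c ((f ^^ n) \<circ> p))" using Suc by (simp add: comp_def)
  also have "\<dots> = spanf I S c (f \<circ> ((f ^^ n) \<circ> p))" using Suc fn_I by (intro T_spanf) auto
  finally show ?case by (simp add: comp_def)
qed

lemma Tn_lin:
  assumes "A \<in> free_space I" "B \<in> free_space I"
  shows "(T ^^ n) (\<lambda>\<phi>. a * A \<phi> + b * B \<phi>) = (\<lambda>\<phi>. a * (T ^^ n) A \<phi> + b * (T ^^ n) B \<phi>)"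
proof (induction n)
  case 0 thus ?case by simp
next
  case (Suc n)
  have "(T ^^ Suc n) (\<lambda>\<phi>. a * A \<phi> + b * B \<phi>) = T (\<lambda>\<phi>. a * (T ^^ n) A \<phi> + b * (T ^^ n) B \<phi>)" using Suc by simp
  also have "\<dots> = (\<lambda>\<phi>. a * T ((T ^^ n) A) \<phi> + b * T ((T ^^ n) B) \<phi>)"
    using TL Tn_free[OF assms(1)] Tn_free[OF assms(2)] by blast
  finally show ?case by simp
qed

end





lemma tent_nz: "max 0 (h - \<bar>t - c\<bar>) \<noteq> (0::real) \<Longrightarrow> c - h < t \<and> t < c + h"
  by (auto simp: max_def split: if_splits)

lemma tent_lip0:
  fixes c h :: real
  assumes tI: "\<And>t. max 0 (h - \<bar>t - c\<bar>) \<noteq> 0 \<Longrightarrow> t \<in> I" and t0: "max 0 (h - \<bar>0 - c\<bar>) = 0"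
  shows "(\<lambda>t. max 0 (h - \<bar>t - c\<bar>)) \<in> Lip0 I" "lipconst I (\<lambda>t. max 0 (h - \<bar>t - c\<bar>)) \<le> 1"
proof -
  have k: "\<bar>max 0 (h - \<bar>a - c\<bar>) - max 0 (h - \<bar>b - c\<bar>)\<bar> \<le> \<bar>a - b\<bar>" for a b :: real
  proof -
    have "\<bar>max 0 (h - \<bar>a - c\<bar>) - max 0 (h - \<bar>b - c\<bar>)\<bar> \<le> \<bar>(h - \<bar>a - c\<bar>) - (h - \<bar>b - c\<bar>)\<bar>"
      by (simp add: max_def)
    also have "\<dots> = \<bar>\<bar>b - c\<bar> - \<bar>a - c\<bar>\<bar>" by simp
    also have "\<dots> \<le> \<bar>(b - c) - (a - c)\<bar>" by (rule abs_triangle_ineq3)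
    also have "\<dots> = \<bar>a - b\<bar>" by simp
    finally show ?thesis .
  qed
  have "1-lipschitz_on I (\<lambda>t. max 0 (h - \<bar>t - c\<bar>))"
    by (rule lipschitz_onI) (use k in \<open>auto simp: dist_real_def\<close>)
  moreover have "\<forall>x. x \<notin> I \<longrightarrow> max 0 (h - \<bar>x - c\<bar>) = 0" using tI by blast
  ultimately show "(\<lambda>t. max 0 (h - \<bar>t - c\<bar>)) \<in> Lip0 I" using t0 by (auto simp: Lip0_def)
  show "lipconst I (\<lambda>t. max 0 (h - \<bar>t - c\<bar>)) \<le> 1" by (rule lipconst_le) (use k in auto)
qed


context
  fixes I :: "real set" and f :: "real \<Rightarrow> real" and T :: "((real \<Rightarrow> real) \<Rightarrow> real) \<Rightarrow> ((real \<Rightarrow> real) \<Rightarrow> real)"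
  assumes I0: "0 \<in> I" and fI: "f ` I \<subseteq> I" and TF: "T ` free_space I \<subseteq> free_space I"
  and TL: "\<forall>\<mu>\<in>free_space I. \<forall>\<nu>\<in>free_space I. \<forall>a b::real.
           T (\<lambda>\<phi>. a * \<mu> \<phi> + b * \<nu> \<phi>) = (\<lambda>\<phi>. a * T \<mu> \<phi> + b * T \<nu> \<phi>)"
  and TD: "\<forall>x\<in>I. T (dirac I x) = dirac I (f x)"
begin

lemma no_interior:
  assumes conn: "connected I" and lip: "\<exists>C. C-lipschitz_on I f" and f0: "f 0 = 0"
    and bad: "\<exists>x\<in>I. f (f x) \<noteq> x"
    and int: "nonempty_interior_in_free I (recurrent_set I T)"
  shows False
proof -
  note Tn_spanf' = Tn_spanf[OF I0 fI TF TL TD]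
  note Tn_lin' = Tn_lin[OF I0 fI TF TL TD]
  note Tn_free' = Tn_free[OF I0 fI TF TL TD]
  note fn_I' = fn_I[OF I0 fI TF TL TD]
  obtain \<mu>s \<epsilon> where \<mu>s: "\<mu>s \<in> free_space I" "\<epsilon> > 0"
    "\<forall>\<nu>\<in>free_space I. dnorm I (\<lambda>\<phi>. \<nu> \<phi> - \<mu>s \<phi>) < \<epsilon> \<longrightarrow> \<nu> \<in> recurrent_set I T"
    using int unfolding nonempty_interior_in_free_def by blast
  obtain \<nu>0 where \<nu>0: "\<nu>0 \<in> dirac_span I" "dnorm I (\<lambda>\<phi>. \<mu>s \<phi> - \<nu>0 \<phi>) < \<epsilon>/2"
  proof -
    have "\<forall>e>0. \<exists>\<nu>\<in>dirac_span I. dnorm I (\<lambda>\<phi>. \<mu>s \<phi> - \<nu> \<phi>) < e" using \<mu>s(1) by (simp add: free_space_def)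
    moreover have "\<epsilon>/2 > 0" using \<mu>s(2) by simp
    ultimately show ?thesis using that by blast
  qed
  obtain S c p where Scp: "finite S" "\<forall>i\<in>S. p i \<in> I" "\<nu>0 = spanf I S c p" using span_spanf[OF \<nu>0(1)] by blast
  obtain \<alpha> \<beta> where J: "\<alpha> < \<beta>" "{\<alpha><..<\<beta>} \<subseteq> I" "0 \<notin> {\<alpha><..<\<beta>}"
     "\<forall>x\<in>{\<alpha><..<\<beta>}. \<exists>y\<in>I. y \<notin> {\<alpha><..<\<beta>} \<and>
        (\<forall>n\<ge>1. (f ^^ n) x = (f ^^ n) y \<or> ((f ^^ n) x \<notin> {\<alpha><..<\<beta>} \<and> (f ^^ n) y \<notin> {\<alpha><..<\<beta>}))"
    using dyn[OF conn I0 lip fI f0 bad] by blast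
  define N where "N = 2 * card S + 1"
  define h where "h = (\<beta> - \<alpha>) / (2 * real N)"
  define x where "x = (\<lambda>j::nat. \<alpha> + (2 * real j + 1) * h)"
  have Npos: "N > 0" by (simp add: N_def)
  have hpos: "h > 0" using J(1) Npos by (simp add: h_def)
  have beta: "\<beta> = \<alpha> + 2 * real N * h" using Npos by (simp add: h_def)
  have tentJ: "t \<in> {\<alpha><..<\<beta>}" if "j < N" "x j - h < t" "t < x j + h" for j t
  proof -
    have "real j + 1 \<le> real N" using that(1) by linarith
    hence A: "(2 * real j + 2) * h \<le> 2 * real N * h" using hpos by (intro mult_right_mono) auto
    have B: "0 \<le> 2 * real j * h" using hpos by simp
    have e1: "x j - h = \<alpha> + 2 * real j * h" "x j + h = \<alpha> + (2 * real j + 2) * h" by (simp_all add: x_def algebra_simps)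
    have "\<alpha> < t" using that(2) e1(1) B by linarith
    moreover have "t < \<beta>" using that(3) e1(2) A beta by linarith
    ultimately show ?thesis by simp
  qed
  have xJ: "x j \<in> {\<alpha><..<\<beta>}" if "j < N" for j using tentJ[OF that, of "x j"] hpos by simp
  define P where "P = (\<lambda>x y. y \<in> I \<and> y \<notin> {\<alpha><..<\<beta>} \<and>
        (\<forall>n\<ge>1. (f ^^ n) x = (f ^^ n) y \<or> ((f ^^ n) x \<notin> {\<alpha><..<\<beta>} \<and> (f ^^ n) y \<notin> {\<alpha><..<\<beta>})))"
  define y where "y = (\<lambda>j. SOME y. P (x j) y)"
  have yP: "P (x j) (y j)" if "j < N" for j
  proof -
    have "\<exists>y. P (x j) y" using bspec[OF J(4) xJ[OF that]] unfolding P_def by blast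
    thus ?thesis unfolding y_def by (rule someI_ex)
  qed
  have xI: "x j \<in> I" if "j < N" for j using xJ[OF that] J(2) by auto
  have yI: "y j \<in> I" if "j < N" for j using yP[OF that] by (simp add: P_def)
  define D where "D = (\<Sum>j<N. \<bar>x j - y j\<bar>)"
  have D0: "D \<ge> 0" by (simp add: D_def sum_nonneg)
  define s where "s = \<epsilon> / (4 * (D + 1))"
  have spos: "s > 0" using \<mu>s(2) D0 by (simp add: s_def)
  have sD: "s * D < \<epsilon> / 2"
  proof -
    have "s * D = \<epsilon> * D / (4 * (D + 1))" by (simp add: s_def)
    also have "\<dots> \<le> \<epsilon> / 4" using D0 \<mu>s(2) by (simp add: field_simps)
    finally show ?thesis using \<mu>s(2) by simp
  qed
  define U1 where "U1 = spanf I {..<N} (\<lambda>_. s) x"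
  define U2 where "U2 = spanf I {..<N} (\<lambda>_. -s) y"
  define U where "U = (\<lambda>\<phi>. 1 * U1 \<phi> + 1 * U2 \<phi>)"
  define \<mu> where "\<mu> = (\<lambda>\<phi>. 1 * \<nu>0 \<phi> + 1 * U \<phi>)"
  have U1s: "U1 \<in> dirac_span I" unfolding U1_def by (rule spanf_span) (use xI in auto)
  have U2s: "U2 \<in> dirac_span I" unfolding U2_def by (rule spanf_span) (use yI in auto)
  have Us: "U \<in> dirac_span I" unfolding U_def by (rule span_lin[OF U1s U2s])
  have \<mu>sp: "\<mu> \<in> dirac_span I" unfolding \<mu>_def by (rule span_lin[OF \<nu>0(1) Us])
  have \<mu>f: "\<mu> \<in> free_space I" by (rule span_free[OF I0 \<mu>sp])
  have bnd_ms: "bnd I (\<lambda>\<phi>. 1 * \<mu>s \<phi> + (-1) * \<nu>0 \<phi>)"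
    by (intro bnd_lin free_bnd \<mu>s(1) span_free[OF I0 \<nu>0(1)])
  have close: "dnorm I (\<lambda>\<phi>. \<mu> \<phi> - \<mu>s \<phi>) < \<epsilon>"
  proof -
    have "dnorm I (\<lambda>\<phi>. \<mu> \<phi> - \<mu>s \<phi>) \<le> dnorm I (\<lambda>\<phi>. \<mu>s \<phi> - \<nu>0 \<phi>) + s * D"
    proof (rule dnorm_le)
      show "0 \<le> dnorm I (\<lambda>\<phi>. \<mu>s \<phi> - \<nu>0 \<phi>) + s * D"
        using dnorm_nonneg[OF bnd_ms] spos D0 by simp
      fix \<phi> assume \<phi>: "\<phi> \<in> Lip0 I" "lipconst I \<phi> \<le> 1"
      have 1: "\<bar>\<mu>s \<phi> - \<nu>0 \<phi>\<bar> \<le> dnorm I (\<lambda>\<phi>. \<mu>s \<phi> - \<nu>0 \<phi>)" using dnorm_ge[OF bnd_ms \<phi>] by simp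
      have "U \<phi> = (\<Sum>j<N. s * (\<phi> (x j) - \<phi> (y j)))"
        by (simp add: U_def U1_def U2_def spanf_eval[OF \<phi>(1)] sum.distrib[symmetric] right_diff_distrib)
      hence "\<bar>U \<phi>\<bar> \<le> (\<Sum>j<N. \<bar>s * (\<phi> (x j) - \<phi> (y j))\<bar>)" by (simp add: sum_abs)
      also have "\<dots> \<le> (\<Sum>j<N. s * \<bar>x j - y j\<bar>)"
      proof (rule sum_mono)
        fix j assume "j \<in> {..<N}"
        hence "\<bar>\<phi> (x j) - \<phi> (y j)\<bar> \<le> \<bar>x j - y j\<bar>" using lip0_le1[OF \<phi>(1) xI yI \<phi>(2)] by auto
        thus "\<bar>s * (\<phi> (x j) - \<phi> (y j))\<bar> \<le> s * \<bar>x j - y j\<bar>" using spos by (simp add: abs_mult)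
      qed
      also have "\<dots> = s * D" by (simp add: D_def sum_distrib_left)
      finally have 2: "\<bar>U \<phi>\<bar> \<le> s * D" .
      have "\<bar>\<mu> \<phi> - \<mu>s \<phi>\<bar> = \<bar>- (\<mu>s \<phi> - \<nu>0 \<phi>) + U \<phi>\<bar>" by (simp add: \<mu>_def)
      also have "\<dots> \<le> \<bar>\<mu>s \<phi> - \<nu>0 \<phi>\<bar> + \<bar>U \<phi>\<bar>" by (metis abs_minus_cancel abs_triangle_ineq)
      finally show "\<bar>\<mu> \<phi> - \<mu>s \<phi>\<bar> \<le> dnorm I (\<lambda>\<phi>. \<mu>s \<phi> - \<nu>0 \<phi>) + s * D" using 1 2 by linarith
    qed
    thus ?thesis using \<nu>0(2) sD by linarith
  qed
  hence rec: "\<mu> \<in> recurrent_set I T" using \<mu>s(3) \<mu>f by blast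
  have lower: "s * h \<le> dnorm I (\<lambda>\<phi>. (T ^^ n) \<mu> \<phi> - \<mu> \<phi>)" if n: "n \<ge> 1" for n
  proof -
    define idx where "idx = (\<lambda>t. nat \<lfloor>(t - \<alpha>) / (2 * h)\<rfloor>)"
    define \<psi> where "\<psi> = (\<lambda>j t. max 0 (h - \<bar>t - x j\<bar>))"
    have idx_eq: "idx t = j" if "\<psi> j t \<noteq> 0" for j t
    proof -
      have "x j - h < t" "t < x j + h" using tent_nz that unfolding \<psi>_def by blast+
      hence "2 * real j * h < t - \<alpha>" "t - \<alpha> < (2 * real j + 2) * h" by (simp_all add: x_def algebra_simps)
      hence "real j < (t - \<alpha>) / (2 * h)" "(t - \<alpha>) / (2 * h) < real j + 1"
        using hpos by (simp_all add: field_simps)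
      hence "\<lfloor>(t - \<alpha>) / (2 * h)\<rfloor> = int j" by (simp add: floor_eq_iff)
      thus ?thesis by (simp add: idx_def)
    qed
    have \<psi>supp: "t \<in> {\<alpha><..<\<beta>}" if "j < N" "\<psi> j t \<noteq> 0" for j t
      using tent_nz[of h t "x j"] that tentJ[OF that(1)] unfolding \<psi>_def by blast
    define Bad where "Bad = idx ` p ` S \<union> idx ` (\<lambda>i. (f ^^ n) (p i)) ` S"
    have "card Bad \<le> card (idx ` p ` S) + card (idx ` (\<lambda>i. (f ^^ n) (p i)) ` S)"
      unfolding Bad_def by (rule card_Un_le)
    also have "\<dots> \<le> card S + card S"
      using card_image_le[of S p] card_image_le[of "p ` S" idx] card_image_le[of S "\<lambda>i. (f ^^ n) (p i)"]
        card_image_le[of "(\<lambda>i. (f ^^ n) (p i)) ` S" idx] Scp(1) by (meson add_mono finite_imageI order_trans)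
    finally have cB: "card Bad < N" by (simp add: N_def)
    have "\<not> {..<N} \<subseteq> Bad"
    proof
      assume "{..<N} \<subseteq> Bad"
      hence "card {..<N} \<le> card Bad" by (rule card_mono[rotated]) (simp add: Bad_def Scp(1))
      thus False using cB by simp
    qed
    then obtain j where j: "j < N" "j \<notin> Bad" by auto
    have \<psi>p: "\<psi> j (p i) = 0" "\<psi> j ((f ^^ n) (p i)) = 0" if "i \<in> S" for i
    proof -
      show "\<psi> j (p i) = 0"
      proof (rule ccontr)
        assume "\<psi> j (p i) \<noteq> 0" hence "idx (p i) = j" by (rule idx_eq)
        thus False using j(2) that by (auto simp: Bad_def)
      qed
      show "\<psi> j ((f ^^ n) (p i)) = 0"
      proof (rule ccontr)
        assume "\<psi> j ((f ^^ n) (p i)) \<noteq> 0" hence "idx ((f ^^ n) (p i)) = j" by (rule idx_eq)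
        thus False using j(2) that by (auto simp: Bad_def)
      qed
    qed
    have \<psi>0: "\<psi> j 0 = 0" using \<psi>supp[OF j(1), of 0] J(3) by blast
    have \<psi>L: "\<psi> j \<in> Lip0 I" "lipconst I (\<psi> j) \<le> 1"
    proof -
      have a: "\<And>t. max 0 (h - \<bar>t - x j\<bar>) \<noteq> 0 \<Longrightarrow> t \<in> I" using \<psi>supp[OF j(1)] J(2) unfolding \<psi>_def by blast
      have b: "max 0 (h - \<bar>0 - x j\<bar>) = 0" using \<psi>0 unfolding \<psi>_def by simp
      show "\<psi> j \<in> Lip0 I" "lipconst I (\<psi> j) \<le> 1" using tent_lip0[OF a b] unfolding \<psi>_def by auto
    qed
    have \<psi>x: "\<psi> j (x j') = (if j' = j then h else 0)" if "j' < N" for j'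
    proof (cases "\<psi> j (x j') = 0")
      case True
      have "\<psi> j' (x j') = h" using hpos by (simp add: \<psi>_def)
      hence "idx (x j') = j'" using hpos by (intro idx_eq) simp
      moreover have "j' = j \<Longrightarrow> \<psi> j (x j') = h" using hpos by (simp add: \<psi>_def)
      ultimately show ?thesis using True hpos by auto
    next
      case False
      hence "idx (x j') = j" by (rule idx_eq)
      moreover have "\<psi> j' (x j') = h" using hpos by (simp add: \<psi>_def)
      hence "idx (x j') = j'" using hpos by (intro idx_eq) simp
      ultimately have "j' = j" by simp
      thus ?thesis using hpos by (simp add: \<psi>_def)
    qed
    have \<psi>y: "\<psi> j (y j') = 0" if "j' < N" for j'
      using yP[OF that] \<psi>supp[OF j(1), of "y j'"] unfolding P_def by blast
    have \<psi>fn: "\<psi> j ((f ^^ n) (x j')) = \<psi> j ((f ^^ n) (y j'))" if "j' < N" for j'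
    proof -
      have "(f ^^ n) (x j') = (f ^^ n) (y j') \<or> ((f ^^ n) (x j') \<notin> {\<alpha><..<\<beta>} \<and> (f ^^ n) (y j') \<notin> {\<alpha><..<\<beta>})"
        using yP[OF that] n unfolding P_def by blast
      thus ?thesis using \<psi>supp[OF j(1)] by metis
    qed
    have \<nu>0f: "\<nu>0 \<in> free_space I" by (rule span_free[OF I0 \<nu>0(1)])
    have U1f: "U1 \<in> free_space I" by (rule span_free[OF I0 U1s])
    have U2f: "U2 \<in> free_space I" by (rule span_free[OF I0 U2s])
    have Uf: "U \<in> free_space I" by (rule span_free[OF I0 Us])
    have Tn1: "(T ^^ n) \<nu>0 = spanf I S c ((f ^^ n) \<circ> p)" unfolding Scp(3) by (rule Tn_spanf'[OF Scp(1,2)])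
    have Tn2: "(T ^^ n) U1 = spanf I {..<N} (\<lambda>_. s) ((f ^^ n) \<circ> x)" unfolding U1_def by (rule Tn_spanf') (use xI in auto)
    have Tn3: "(T ^^ n) U2 = spanf I {..<N} (\<lambda>_. -s) ((f ^^ n) \<circ> y)" unfolding U2_def by (rule Tn_spanf') (use yI in auto)
    have T\<mu>: "(T ^^ n) \<mu> = (\<lambda>\<phi>. 1 * (T ^^ n) \<nu>0 \<phi> + 1 * (1 * (T ^^ n) U1 \<phi> + 1 * (T ^^ n) U2 \<phi>))"
      unfolding \<mu>_def Tn_lin'[OF \<nu>0f Uf] unfolding U_def Tn_lin'[OF U1f U2f] ..
    define A1 where "A1 = (\<Sum>i\<in>S. c i * \<psi> j ((f ^^ n) (p i)))"
    define A2 where "A2 = (\<Sum>j'<N. s * \<psi> j ((f ^^ n) (x j')))"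
    define A3 where "A3 = (\<Sum>j'<N. (-s) * \<psi> j ((f ^^ n) (y j')))"
    define B1 where "B1 = (\<Sum>i\<in>S. c i * \<psi> j (p i))"
    define B2 where "B2 = (\<Sum>j'<N. s * \<psi> j (x j'))"
    define B3 where "B3 = (\<Sum>j'<N. (-s) * \<psi> j (y j'))"
    have vT: "(T ^^ n) \<mu> (\<psi> j) = A1 + (A2 + A3)"
      unfolding T\<mu> Tn1 Tn2 Tn3 A1_def A2_def A3_def spanf_eval[OF \<psi>L(1)] by simp
    have v\<mu>: "\<mu> (\<psi> j) = B1 + (B2 + B3)"
      unfolding \<mu>_def U_def Scp(3) U1_def U2_def B1_def B2_def B3_def spanf_eval[OF \<psi>L(1)] by simp
    have "A1 = 0" unfolding A1_def by (rule sum.neutral) (use \<psi>p in auto)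
    moreover have "B1 = 0" unfolding B1_def by (rule sum.neutral) (use \<psi>p in auto)
    moreover have "A3 = - A2" unfolding A2_def A3_def sum_negf[symmetric] by (rule sum.cong) (use \<psi>fn in auto)
    moreover have "B3 = 0" unfolding B3_def by (rule sum.neutral) (use \<psi>y in auto)
    moreover have "B2 = s * h"
    proof -
      have "B2 = (\<Sum>j'<N. if j' = j then s * h else 0)" unfolding B2_def by (rule sum.cong) (use \<psi>x in auto)
      also have "\<dots> = s * h" using j(1) by simp
      finally show ?thesis .
    qed
    ultimately have val: "(T ^^ n) \<mu> (\<psi> j) - \<mu> (\<psi> j) = - (s * h)" using vT v\<mu> by simp
    have bd: "bnd I (\<lambda>\<phi>. 1 * (T ^^ n) \<mu> \<phi> + (-1) * \<mu> \<phi>)"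
      by (intro bnd_lin free_bnd Tn_free' \<mu>f)
    have "\<bar>(T ^^ n) \<mu> (\<psi> j) - \<mu> (\<psi> j)\<bar> \<le> dnorm I (\<lambda>\<phi>. (T ^^ n) \<mu> \<phi> - \<mu> \<phi>)"
      using dnorm_ge[OF bd \<psi>L] by simp
    thus ?thesis using val spos hpos by simp
  qed
  have "ereal (s * h) \<le> liminf (\<lambda>n. ereal (dnorm I (\<lambda>\<phi>. (T ^^ n) \<mu> \<phi> - \<mu> \<phi>)))"
    by (rule Liminf_bounded) (use lower in \<open>auto simp: eventually_sequentially\<close>)
  moreover have "liminf (\<lambda>n. ereal (dnorm I (\<lambda>\<phi>. (T ^^ n) \<mu> \<phi> - \<mu> \<phi>))) = 0"
    using rec by (simp add: recurrent_set_def)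
  ultimately have "s * h \<le> 0" by simp
  moreover have "s * h > 0" using spos hpos by simp
  ultimately show False by linarith
qed


lemma spanf_cong: "(\<And>i. i \<in> S \<Longrightarrow> p i = q i) \<Longrightarrow> spanf I S c p = spanf I S c q"
  unfolding spanf_def by (intro ext sum.cong) auto

lemma invol_rec:
  assumes inv: "\<forall>x\<in>I. f (f x) = x"
    and bound: "\<exists>C. \<forall>\<mu>\<in>free_space I. dnorm I (T \<mu>) \<le> C * dnorm I \<mu>"
  shows "recurrent_set I T = free_space I"
proof -
  note T_spanf' = T_spanf[OF I0 fI TF TL TD]
  obtain C where C: "\<forall>\<mu>\<in>free_space I. dnorm I (T \<mu>) \<le> C * dnorm I \<mu>" using bound by blast
  define C' where "C' = max C 0"
  have C': "dnorm I (T \<mu>) \<le> C' * dnorm I \<mu>" if "\<mu> \<in> free_space I" for \<mu>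
  proof -
    have "0 \<le> dnorm I \<mu>" by (rule dnorm_nonneg[OF free_bnd[OF that]])
    hence "C * dnorm I \<mu> \<le> C' * dnorm I \<mu>" by (intro mult_right_mono) (auto simp: C'_def)
    thus ?thesis using C that by force
  qed
  have C'0: "C' \<ge> 0" by (simp add: C'_def)
  have TT: "T (T \<mu>) = \<mu>" if \<mu>: "\<mu> \<in> free_space I" for \<mu>
  proof
    fix \<phi>
    have T\<mu>: "T \<mu> \<in> free_space I" using TF \<mu> by auto
    have TT\<mu>: "T (T \<mu>) \<in> free_space I" using TF T\<mu> by auto
    show "T (T \<mu>) \<phi> = \<mu> \<phi>"
    proof (cases "\<phi> \<in> Lip0 I")
      case False
      thus ?thesis using free_dual[OF \<mu>] free_dual[OF TT\<mu>] by (simp add: Lip0_dual_def)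
    next
      case True
      define L where "L = lipconst I \<phi>"
      have L0: "0 \<le> L" unfolding L_def by (rule lipconst_nonneg[OF True])
      define \<psi> where "\<psi> = (\<lambda>t. (1 / (L + 1)) * \<phi> t + 0 * \<phi> t)"
      have \<psi>L: "\<psi> \<in> Lip0 I" unfolding \<psi>_def by (rule lip0_lin[OF True True])
      have \<psi>1: "lipconst I \<psi> \<le> 1"
      proof (rule lipconst_le)
        fix a b assume "a \<in> I" "b \<in> I"
        hence "\<bar>\<phi> a - \<phi> b\<bar> \<le> L * \<bar>a - b\<bar>" using lip0_le[OF True] by (simp add: L_def)
        also have "\<dots> \<le> (L + 1) * \<bar>a - b\<bar>" by (intro mult_right_mono) auto
        finally have "\<bar>\<phi> a - \<phi> b\<bar> / (L + 1) \<le> \<bar>a - b\<bar>" using L0 by (simp add: divide_le_eq algebra_simps)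
        moreover have "\<psi> a - \<psi> b = (\<phi> a - \<phi> b) / (L + 1)" by (simp add: \<psi>_def diff_divide_distrib)
        hence "\<bar>\<psi> a - \<psi> b\<bar> = \<bar>\<phi> a - \<phi> b\<bar> / (L + 1)" using L0 by simp
        ultimately show "\<bar>\<psi> a - \<psi> b\<bar> \<le> 1 * \<bar>a - b\<bar>" by simp
      qed simp
      have \<phi>eq: "\<phi> = (\<lambda>t. (L + 1) * \<psi> t + 0 * \<psi> t)" using L0 by (auto simp: \<psi>_def field_simps)
      have scale: "A \<phi> = (L + 1) * A \<psi>" if "A \<in> Lip0_dual I" for A
      proof -
        have "A (\<lambda>t. (L + 1) * \<psi> t + 0 * \<psi> t) = (L + 1) * A \<psi> + 0 * A \<psi>"
          using that \<psi>L unfolding Lip0_dual_def by blast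
        thus ?thesis using \<phi>eq by simp
      qed
      have small: "\<bar>T (T \<mu>) \<psi> - \<mu> \<psi>\<bar> < \<delta>" if \<delta>: "\<delta> > 0" for \<delta>
      proof -
        define d where "d = \<delta> / (C' * C' + 2)"
        have dpos: "d > 0" using \<delta> C'0 by (simp add: d_def add_nonneg_pos)
        obtain \<nu> where \<nu>: "\<nu> \<in> dirac_span I" "dnorm I (\<lambda>\<phi>. \<mu> \<phi> - \<nu> \<phi>) < d"
        proof -
          have "\<forall>e>0. \<exists>\<nu>\<in>dirac_span I. dnorm I (\<lambda>\<phi>. \<mu> \<phi> - \<nu> \<phi>) < e" using \<mu> by (simp add: free_space_def)
          thus ?thesis using that dpos by blast
        qed
        have \<nu>f: "\<nu> \<in> free_space I" by (rule span_free[OF I0 \<nu>(1)])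
        obtain S c p where Scp: "finite S" "\<forall>i\<in>S. p i \<in> I" "\<nu> = spanf I S c p" using span_spanf[OF \<nu>(1)] by blast
        have TT\<nu>: "T (T \<nu>) = \<nu>"
        proof -
          have "T (T \<nu>) = spanf I S c (f \<circ> (f \<circ> p))"
            unfolding Scp(3) T_spanf'[OF Scp(1,2)] using Scp(1,2) fI by (intro T_spanf') auto
          also have "\<dots> = spanf I S c p" using Scp(2) inv by (intro spanf_cong) auto
          finally show ?thesis using Scp(3) by simp
        qed
        define w where "w = (\<lambda>\<phi>. 1 * \<mu> \<phi> + (-1) * \<nu> \<phi>)"
        have wf: "w \<in> free_space I" unfolding w_def by (rule free_lin[OF I0 \<mu> \<nu>f])
        have Tw: "T w = (\<lambda>\<phi>. 1 * T \<mu> \<phi> + (-1) * T \<nu> \<phi>)" unfolding w_def using TL \<mu> \<nu>f by blast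
        have T\<nu>: "T \<nu> \<in> free_space I" using TF \<nu>f by auto
        have TTw: "T (T w) = (\<lambda>\<phi>. 1 * T (T \<mu>) \<phi> + (-1) * T (T \<nu>) \<phi>)" unfolding Tw using TL T\<mu> T\<nu> by blast
        have Twf: "T w \<in> free_space I" using TF wf by auto
        have TTwf: "T (T w) \<in> free_space I" using TF Twf by auto
        have dw: "dnorm I w < d" using \<nu>(2) by (simp add: w_def)
        have dw0: "0 \<le> dnorm I w" by (rule dnorm_nonneg[OF free_bnd[OF wf]])
        have "dnorm I (T (T w)) \<le> C' * dnorm I (T w)" by (rule C'[OF Twf])
        also have "\<dots> \<le> C' * (C' * dnorm I w)" using C'[OF wf] C'0 by (intro mult_left_mono) auto
        also have "\<dots> \<le> C' * C' * d" using dw C'0 by (simp add: mult_left_mono mult.assoc less_imp_le)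
        finally have 1: "\<bar>T (T w) \<psi>\<bar> \<le> C' * C' * d" using dnorm_ge[OF free_bnd[OF TTwf] \<psi>L \<psi>1] by linarith
        have 2: "\<bar>w \<psi>\<bar> < d" using dnorm_ge[OF free_bnd[OF wf] \<psi>L \<psi>1] dw by linarith
        have e1: "T (T w) \<psi> = T (T \<mu>) \<psi> - \<nu> \<psi>" unfolding TTw using TT\<nu> by simp
        have e2: "w \<psi> = \<mu> \<psi> - \<nu> \<psi>" by (simp add: w_def)
        have "T (T \<mu>) \<psi> - \<mu> \<psi> = T (T w) \<psi> - w \<psi>" using e1 e2 by simp
        hence "\<bar>T (T \<mu>) \<psi> - \<mu> \<psi>\<bar> < C' * C' * d + d" using 1 2 by linarith
        also have "C' * C' * d + d \<le> \<delta>"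
        proof -
          have p: "C' * C' + 2 > 0" using C'0 by (simp add: add_nonneg_pos)
          have "(C' * C' + 2) * d = \<delta>" using p by (simp add: d_def)
          moreover have "C' * C' * d + d \<le> (C' * C' + 2) * d" using dpos by (simp add: algebra_simps)
          ultimately show ?thesis by simp
        qed
        finally show ?thesis .
      qed
      have "T (T \<mu>) \<psi> = \<mu> \<psi>"
      proof (rule ccontr)
        assume "T (T \<mu>) \<psi> \<noteq> \<mu> \<psi>"
        hence "\<bar>T (T \<mu>) \<psi> - \<mu> \<psi>\<bar> > 0" by simp
        from small[OF this] show False by simp
      qed
      thus ?thesis using scale[OF free_dual[OF \<mu>]] scale[OF free_dual[OF TT\<mu>]] by simp
    qed
  qed
  show ?thesis
  proof
    show "recurrent_set I T \<subseteq> free_space I" by (auto simp: recurrent_set_def)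
  next
    show "free_space I \<subseteq> recurrent_set I T"
    proof
      fix \<mu> assume \<mu>: "\<mu> \<in> free_space I"
      have even: "(T ^^ (2 * k)) \<mu> = \<mu>" for k
      proof (induction k)
        case (Suc k)
        have "(T ^^ (2 * Suc k)) \<mu> = T (T ((T ^^ (2 * k)) \<mu>))" by simp
        thus ?case using Suc TT[OF \<mu>] by simp
      qed simp
      define X where "X = (\<lambda>n. ereal (dnorm I (\<lambda>\<phi>. (T ^^ n) \<mu> \<phi> - \<mu> \<phi>)))"
      have X0: "0 \<le> X n" for n
      proof -
        have "bnd I (\<lambda>\<phi>. 1 * (T ^^ n) \<mu> \<phi> + (-1) * \<mu> \<phi>)"
          by (intro bnd_lin free_bnd Tn_free[OF I0 fI TF TL TD] \<mu>)
        thus ?thesis using dnorm_nonneg by (simp add: X_def)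
      qed
      have "0 \<le> liminf X" by (rule Liminf_bounded) (use X0 in auto)
      moreover have "liminf X \<le> liminf (X \<circ> (\<lambda>k. 2 * k))" by (rule liminf_subseq_mono) (simp add: strict_mono_def)
      moreover have "X \<circ> (\<lambda>k. 2 * k) = (\<lambda>k. 0)" by (auto simp: X_def even dnorm_zero zero_ereal_def)
      moreover have "liminf (\<lambda>k::nat. 0::ereal) = 0" by (rule Liminf_const) simp
      ultimately have "liminf X = 0" by (metis antisym)
      thus "\<mu> \<in> recurrent_set I T" using \<mu> by (simp add: recurrent_set_def X_def)
    qed
  qed
qed

end


theorem theorem3p21:
  fixes I :: "real set" and f :: "real \<Rightarrow> real"
    and T :: "((real \<Rightarrow> real) \<Rightarrow> real) \<Rightarrow> ((real \<Rightarrow> real) \<Rightarrow> real)"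
  assumes "closed I" and "connected I" and "0 \<in> I"
    and "\<exists>C. C-lipschitz_on I f" and "f ` I \<subseteq> I" and "f 0 = 0"
    and "T ` free_space I \<subseteq> free_space I"
    and "\<forall>\<mu>\<in>free_space I. \<forall>\<nu>\<in>free_space I. \<forall>a b::real.
           T (\<lambda>\<phi>. a * \<mu> \<phi> + b * \<nu> \<phi>) = (\<lambda>\<phi>. a * T \<mu> \<phi> + b * T \<nu> \<phi>)"
    and "\<exists>C. \<forall>\<mu>\<in>free_space I. dnorm I (T \<mu>) \<le> C * dnorm I \<mu>"
    and "\<forall>x\<in>I. T (dirac I x) = dirac I (f x)"
    and "nonempty_interior_in_free I (recurrent_set I T)"
  shows "(\<forall>x\<in>I. f (f x) = x) \<and> recurrent_set I T = free_space I"
proof -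
  have inv: "\<forall>x\<in>I. f (f x) = x"
  proof (rule ccontr)
    assume "\<not> (\<forall>x\<in>I. f (f x) = x)"
    hence "\<exists>x\<in>I. f (f x) \<noteq> x" by blast
    thus False using no_interior[OF assms(3,5,7,8,10) assms(2,4,6) _ assms(11)] by blast
  qed
  moreover have "recurrent_set I T = free_space I"
    by (rule invol_rec[OF assms(3,5,7,8,10) inv assms(9)])
  ultimately show ?thesis by blast
qed

end
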